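(* Let $\lambda>0$ and $f_1,f_2\in\Omega_\lambda$. If $\lambda\le1$, then the Hadamard product $f_1*f_2\in\Omega_\lambda$.
   Context: $\Omega_\lambda$ denotes the set of functions $f$ analytic in $\mathbb{D}=\{z:|z|<1\}$ with $f(0)=0$, $f'(0)=1$, such that $zf'(z)-f(z)=\lambda z^2\phi(z)$ for some analytic $\phi$ on $\mathbb{D}$ with $|\phi(z)|\le1$. The Hadamard product of $\sum a_kz^k$ and $\sum b_kz^k$ is $\sum a_kb_kz^k$. *)

theory Defs
  imports "HOL-Complex_Analysis.Complex_Analysis"
begin

definition taylor_coeff :: "(complex \<Rightarrow> complex) \<Rightarrow> nat \<Rightarrow> complex" where
  "taylor_coeff f k = (deriv ^^ k) f 0 / of_nat (fact k)"

definition hadamard :: "(complex \<Rightarrow> complex) \<Rightarrow> (complex \<Rightarrow> complex) \<Rightarrow> complex \<Rightarrow> complex" where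
  "hadamard f g z = (\<Sum>k. taylor_coeff f k * taylor_coeff g k * z ^ k)"

definition Omega :: "real \<Rightarrow> (complex \<Rightarrow> complex) set" where
  "Omega lam = {f. f holomorphic_on ball 0 1 \<and> f 0 = 0 \<and> deriv f 0 = 1 \<and>
     (\<exists>\<phi>. \<phi> holomorphic_on ball 0 1 \<and> (\<forall>z\<in>ball 0 1. norm (\<phi> z) \<le> 1) \<and>
        (\<forall>z\<in>ball 0 1. z * deriv f z - f z = complex_of_real lam * z ^ 2 * \<phi> z))}"

end

theory Submission imports Defs begin

lemma coeff_integral:
  fixes g :: "complex \<Rightarrow> complex"
  assumes hol: "g holomorphic_on ball 0 1" and r: "0 < r" "r < 1"
  shows "((\<lambda>s. g (circlepath 0 r s) * cnj (circlepath 0 r s) ^ k) has_integral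
           (complex_of_real r ^ (2*k) * taylor_coeff g k)) {0..1}"
proof -
  have sub1: "cball 0 r \<subseteq> ball (0::complex) 1" using r by auto
  have "continuous_on (cball 0 r) g"
    using holomorphic_on_imp_continuous_on[OF hol] continuous_on_subset sub1 by blast
  moreover have "g holomorphic_on ball 0 r" using hol holomorphic_on_subset sub1 ball_subset_cball by blast
  moreover have "(0::complex) \<in> ball 0 r" using r by simp
  ultimately have C: "((\<lambda>u. g u / (u-0) ^ (Suc k)) has_contour_integral ((2 * pi * \<i>) / (fact k) * (deriv ^^ k) g 0))
           (circlepath 0 r)"
    by (rule Cauchy_has_contour_integral_higher_derivative_circlepath)
  define I where "I = (2 * pi * \<i>) / (fact k) * (deriv ^^ k) g 0"
  have C2: "((\<lambda>x. g (circlepath 0 r x) / (circlepath 0 r x) ^ (Suc k) * vector_derivative (circlepath 0 r) (at x within {0..1})) has_integral I) {0..1}"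
    using C unfolding has_contour_integral_def I_def by simp
  have C3: "((\<lambda>x. (complex_of_real r ^ (2*k) / (2 * pi * \<i>)) * (g (circlepath 0 r x) / (circlepath 0 r x) ^ (Suc k) * vector_derivative (circlepath 0 r) (at x within {0..1}))) has_integral ((complex_of_real r ^ (2*k) / (2 * pi * \<i>)) * I)) {0..1}"
    by (rule has_integral_mult_right[OF C2])
  have eqv: "(complex_of_real r ^ (2*k) / (2 * pi * \<i>)) * I = complex_of_real r ^ (2*k) * taylor_coeff g k"
    unfolding I_def taylor_coeff_def by (simp add: field_simps)
  have pt: "(complex_of_real r ^ (2*k) / (2 * pi * \<i>)) * (g (circlepath 0 r x) / (circlepath 0 r x) ^ (Suc k) * vector_derivative (circlepath 0 r) (at x within {0..1}))
      = g (circlepath 0 r x) * cnj (circlepath 0 r x) ^ k" if x: "x \<in> {0..1}" for x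
  proof -
    define e where "e = exp (2 * of_real pi * \<i> * x)"
    have ne: "e \<noteq> 0" unfolding e_def by simp
    have n1: "norm e = 1" unfolding e_def by (simp add: norm_exp_eq_Re)
    have ce: "cnj e * e = 1" using complex_norm_square[of e] n1 by (simp add: mult.commute)
    have cp: "circlepath 0 r x = of_real r * e" unfolding circlepath_def part_circlepath_def linepath_def e_def by (simp add: algebra_simps)
    have vd: "vector_derivative (circlepath 0 r) (at x within {0..1}) = 2 * pi * \<i> * r * e"
      using x vector_derivative_circlepath01 e_def by auto
    have cne: "cnj e = 1 / e" using ce ne by (simp add: field_simps)
    show ?thesis unfolding cp vd using r ne
      by (simp add: cne field_simps power_mult_distrib power2_eq_square power_mult)
  qed
  show ?thesis
    using C3 unfolding eqv by (subst (asm) has_integral_cong[OF pt]) auto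
qed


lemma taylor_coeff_poly:
  "taylor_coeff (\<lambda>u. \<Sum>j<N. c j * u ^ j) k = (if k < N then c k else 0)"
proof -
  have "(\<lambda>u. \<Sum>j<N. c j * u ^ j) has_fps_expansion (\<Sum>j<N. fps_const (c j) * fps_X ^ j)"
    by (intro has_fps_expansion_sum has_fps_expansion_cmult_left has_fps_expansion_fps_X_power)
  from fps_nth_fps_expansion[OF this, of k]
  have E: "(\<Sum>j<N. c j * (if k = j then 1 else 0)) = taylor_coeff (\<lambda>u. \<Sum>j<N. c j * u ^ j) k"
    unfolding taylor_coeff_def by (simp add: fps_sum_nth)
  have "(\<Sum>j<N. c j * (if k = j then 1 else 0)) = (\<Sum>j<N. if k = j then c k else 0)"
    by (intro sum.cong refl) auto
  also have "\<dots> = (if k < N then c k else 0)" by (simp add: sum.delta)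
  finally show ?thesis using E by simp
qed

lemma bessel_r:
  fixes \<phi> :: "complex \<Rightarrow> complex"
  assumes hol: "\<phi> holomorphic_on ball 0 1" and bd: "\<forall>z\<in>ball 0 1. norm (\<phi> z) \<le> 1"
    and r: "0 < r" "r < 1"
  shows "(\<Sum>j<N. norm (taylor_coeff \<phi> j) ^ 2 * r ^ (2*j)) \<le> 1"
proof -
  define c where "c j = taylor_coeff \<phi> j" for j
  define \<gamma> where "\<gamma> = circlepath 0 r"
  define p where "p u = (\<Sum>j<N. c j * u ^ j)" for u
  define S where "S = (\<Sum>j<N. norm (c j) ^ 2 * r ^ (2*j))"
  have pc: "taylor_coeff p k = (if k < N then c k else 0)" for k
    unfolding p_def by (rule taylor_coeff_poly)
  have php: "p holomorphic_on ball 0 1" unfolding p_def by (intro holomorphic_intros)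
  have Sval: "(\<Sum>j<N. cnj (c j) * (complex_of_real r ^ (2*j) * c j)) = of_real S"
  proof -
    have ns: "cnj z * z = of_real (norm z ^ 2)" for z :: complex
      using complex_norm_square[of z] by (simp add: mult.commute)
    show ?thesis unfolding S_def of_real_sum
    proof (intro sum.cong refl)
      fix x
      have "cnj (c x) * (complex_of_real r ^ (2*x) * c x) = (cnj (c x) * c x) * complex_of_real (r ^ (2*x))"
        by (simp add: mult_ac)
      also have "\<dots> = complex_of_real (norm (c x) ^ 2 * r ^ (2*x))"
        unfolding ns of_real_mult ..
      finally show "cnj (c x) * (complex_of_real r ^ (2*x) * c x) = complex_of_real (norm (c x) ^ 2 * r ^ (2*x))" .
    qed
  qed
  have "((\<lambda>s. \<Sum>j<N. cnj (c j) * (\<phi> (\<gamma> s) * cnj (\<gamma> s) ^ j)) has_integral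
      (\<Sum>j<N. cnj (c j) * (complex_of_real r ^ (2*j) * c j))) {0..1}"
    unfolding \<gamma>_def c_def
    by (intro has_integral_sum finite_lessThan has_integral_mult_right coeff_integral hol r)
  moreover have "(\<Sum>j<N. cnj (c j) * (\<phi> (\<gamma> s) * cnj (\<gamma> s) ^ j)) = cnj (p (\<gamma> s)) * \<phi> (\<gamma> s)" for s
    unfolding p_def by (simp add: sum_distrib_left sum_distrib_right mult_ac)
  ultimately have I1: "((\<lambda>s. cnj (p (\<gamma> s)) * \<phi> (\<gamma> s)) has_integral of_real S) {0..1}"
    using Sval by simp
  have "((\<lambda>s. \<Sum>j<N. cnj (c j) * (p (\<gamma> s) * cnj (\<gamma> s) ^ j)) has_integral
      (\<Sum>j<N. cnj (c j) * (complex_of_real r ^ (2*j) * taylor_coeff p j))) {0..1}"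
    unfolding \<gamma>_def
    by (intro has_integral_sum finite_lessThan has_integral_mult_right coeff_integral php r)
  moreover have "(\<Sum>j<N. cnj (c j) * (p (\<gamma> s) * cnj (\<gamma> s) ^ j)) = p (\<gamma> s) * cnj (p (\<gamma> s))" for s
    unfolding p_def by (simp add: sum_distrib_left sum_distrib_right mult_ac)
  moreover have "(\<Sum>j<N. cnj (c j) * (complex_of_real r ^ (2*j) * taylor_coeff p j)) = of_real S"
    using Sval by (simp add: pc)
  ultimately have I2: "((\<lambda>s. p (\<gamma> s) * cnj (p (\<gamma> s))) has_integral of_real S) {0..1}"
    by simp
  have R1: "((\<lambda>s. Re (cnj (p (\<gamma> s)) * \<phi> (\<gamma> s))) has_integral S) {0..1}"
    using has_integral_Re[OF I1] by simp
  have R2: "((\<lambda>s. norm (p (\<gamma> s)) ^ 2) has_integral S) {0..1}"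
  proof -
    have e: "Re (z * cnj z) = norm z ^ 2" for z :: complex
      using complex_norm_square[of z] by (metis Re_complex_of_real of_real_power)
    show ?thesis using has_integral_Re[OF I2] unfolding e by simp
  qed
  have R3: "((\<lambda>s. (norm (p (\<gamma> s)) ^ 2 + 1) / 2) has_integral (S + 1) / 2) {0..1}"
    using has_integral_divide[OF has_integral_add[OF R2 has_integral_const_real[of 1 0 1]], of 2]
    by simp
  have "S \<le> (S + 1) / 2"
  proof (rule has_integral_le[OF R1 R3])
    fix s :: real assume s: "s \<in> {0..1}"
    have "norm (\<gamma> s) = r" unfolding \<gamma>_def circlepath_def part_circlepath_def using r
      by (simp add: norm_mult norm_exp_eq_Re)
    hence "\<gamma> s \<in> ball 0 1" using r by simp
    hence f1: "norm (\<phi> (\<gamma> s)) \<le> 1" using bd by blast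
    have "Re (cnj (p (\<gamma> s)) * \<phi> (\<gamma> s)) \<le> norm (cnj (p (\<gamma> s)) * \<phi> (\<gamma> s))"
      by (rule complex_Re_le_cmod)
    also have "\<dots> = norm (p (\<gamma> s)) * norm (\<phi> (\<gamma> s))" by (simp add: norm_mult)
    also have "\<dots> \<le> norm (p (\<gamma> s))" using f1 by (simp add: mult_left_le)
    also have "\<dots> \<le> (norm (p (\<gamma> s)) ^ 2 + 1) / 2"
      using sum_squares_ge_zero[of "norm (p (\<gamma> s)) - 1" 0] by (simp add: power2_eq_square algebra_simps)
    finally show "Re (cnj (p (\<gamma> s)) * \<phi> (\<gamma> s)) \<le> (norm (p (\<gamma> s)) ^ 2 + 1) / 2" .
  qed
  thus ?thesis unfolding S_def c_def by simp
qed


lemma bessel: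
  fixes \<phi> :: "complex \<Rightarrow> complex"
  assumes hol: "\<phi> holomorphic_on ball 0 1" and bd: "\<forall>z\<in>ball 0 1. norm (\<phi> z) \<le> 1"
  shows "(\<Sum>j<N. norm (taylor_coeff \<phi> j) ^ 2) \<le> 1"
proof -
  define q where "q r = (\<Sum>j<N. norm (taylor_coeff \<phi> j) ^ 2 * r ^ (2*j))" for r :: real
  have "(q \<longlongrightarrow> q 1) (at_left 1)"
    unfolding q_def by (intro tendsto_intros)
  moreover have "eventually (\<lambda>r. q r \<le> 1) (at_left 1)"
  proof -
    have "eventually (\<lambda>r. r \<in> {0<..<1}) (at_left (1::real))"
      by (rule eventually_at_left_real) simp
    thus ?thesis
      by (rule eventually_mono) (use bessel_r[OF hol bd] in \<open>auto simp: q_def\<close>)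
  qed
  ultimately have "q 1 \<le> 1"
    by (intro tendsto_upperbound) (auto simp: trivial_limit_at_left_real)
  thus ?thesis by (simp add: q_def)
qed

lemma bessel_summable:
  fixes \<phi> :: "complex \<Rightarrow> complex"
  assumes hol: "\<phi> holomorphic_on ball 0 1" and bd: "\<forall>z\<in>ball 0 1. norm (\<phi> z) \<le> 1"
  shows "summable (\<lambda>j. norm (taylor_coeff \<phi> j) ^ 2)"
    and "(\<Sum>j. norm (taylor_coeff \<phi> j) ^ 2) \<le> 1"
    and "norm (taylor_coeff \<phi> j) \<le> 1"
proof -
  show s: "summable (\<lambda>j. norm (taylor_coeff \<phi> j) ^ 2)"
    by (rule summableI_nonneg_bounded[where x=1]) (use bessel[OF hol bd] in auto)
  show "(\<Sum>j. norm (taylor_coeff \<phi> j) ^ 2) \<le> 1"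
    by (rule suminf_le_const[OF s]) (use bessel[OF hol bd] in auto)
  have "norm (taylor_coeff \<phi> j) ^ 2 \<le> (\<Sum>i<Suc j. norm (taylor_coeff \<phi> i) ^ 2)"
    by (rule member_le_sum) auto
  also have "\<dots> \<le> 1" by (rule bessel[OF hol bd])
  finally show "norm (taylor_coeff \<phi> j) \<le> 1"
    by (simp add: power_le_one_iff)
qed

lemma conv_radius_bounded:
  fixes F :: "complex fps"
  assumes "\<And>n. norm (fps_nth F n) \<le> B"
  shows "fps_conv_radius F \<ge> 1"
  unfolding fps_conv_radius_def
proof (rule conv_radius_geI_ex')
  fix r :: real assume r: "0 < r" "ereal r < 1"
  hence r1: "r < 1" by simp
  show "summable (\<lambda>n. fps_nth F n * of_real r ^ n)"
  proof (rule summable_comparison_test)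
    show "\<exists>N. \<forall>n\<ge>N. norm (fps_nth F n * complex_of_real r ^ n) \<le> B * r ^ n"
      using assms r by (auto simp: norm_mult norm_power intro!: mult_right_mono)
    show "summable (\<lambda>n. B * r ^ n)"
      using r r1 by (intro summable_mult summable_geometric) auto
  qed
qed

lemma coeff_rel:
  fixes f \<phi> :: "complex \<Rightarrow> complex"
  assumes hf: "f holomorphic_on ball 0 1" and h\<phi>: "\<phi> holomorphic_on ball 0 1"
    and eq: "\<forall>z\<in>ball 0 1. z * deriv f z - f z = complex_of_real lam * z ^ 2 * \<phi> z"
  shows "of_nat (j+1) * taylor_coeff f (j+2) = of_real lam * taylor_coeff \<phi> j"
proof -
  define F where "F = fps_expansion f 0"
  define P where "P = fps_expansion \<phi> 0"
  have eF: "f has_fps_expansion F" unfolding F_def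
    by (rule has_fps_expansion_fps_expansion[OF _ _ hf]) auto
  have eP: "\<phi> has_fps_expansion P" unfolding P_def
    by (rule has_fps_expansion_fps_expansion[OF _ _ h\<phi>]) auto
  have E1: "(\<lambda>z. z * deriv f z - f z) has_fps_expansion fps_X * fps_deriv F - F"
    by (intro has_fps_expansion_diff has_fps_expansion_mult has_fps_expansion_fps_X has_fps_expansion_deriv eF)
  have E2: "(\<lambda>z. complex_of_real lam * z ^ 2 * \<phi> z) has_fps_expansion fps_const (complex_of_real lam) * fps_X ^ 2 * P"
    by (intro has_fps_expansion_mult has_fps_expansion_cmult_left has_fps_expansion_fps_X_power eP)
  have ev: "eventually (\<lambda>z. z * deriv f z - f z = complex_of_real lam * z ^ 2 * \<phi> z) (nhds 0)"
    using eq by (intro eventually_nhds_in_open[of "ball 0 1", THEN eventually_mono]) auto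
  have "(\<lambda>z. complex_of_real lam * z ^ 2 * \<phi> z) has_fps_expansion fps_X * fps_deriv F - F"
    using E1 has_fps_expansion_cong[OF ev refl] by simp
  from fps_expansion_unique_complex[OF this E2]
  have "(fps_X * fps_deriv F - F) $ (j+2) = (fps_const (complex_of_real lam) * fps_X ^ 2 * P) $ (j+2)"
    by simp
  hence "of_nat (j+2) * F $ (j+2) - F $ (j+2) = of_real lam * P $ j"
    by (simp add: mult.assoc fps_X_power_mult_nth)
  moreover have "F $ n = taylor_coeff f n" "P $ n = taylor_coeff \<phi> n" for n
    unfolding F_def P_def fps_expansion_def taylor_coeff_def by simp_all
  ultimately show ?thesis by (simp add: algebra_simps)
qed


lemma omega_data:
  assumes "f \<in> Omega lam"
  obtains \<phi> where "f holomorphic_on ball 0 1" "taylor_coeff f 0 = 0" "taylor_coeff f 1 = 1"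
    "\<phi> holomorphic_on ball 0 1" "\<forall>z\<in>ball 0 1. norm (\<phi> z) \<le> 1"
    "\<And>j. of_nat (j+1) * taylor_coeff f (j+2) = of_real lam * taylor_coeff \<phi> j"
proof -
  from assms obtain \<phi> where hf: "f holomorphic_on ball 0 1" and f0: "f 0 = 0" and f1: "deriv f 0 = 1"
    and h\<phi>: "\<phi> holomorphic_on ball 0 1" and b: "\<forall>z\<in>ball 0 1. norm (\<phi> z) \<le> 1"
    and eq: "\<forall>z\<in>ball 0 1. z * deriv f z - f z = complex_of_real lam * z ^ 2 * \<phi> z"
    unfolding Omega_def by blast
  show ?thesis
    by (rule that[OF hf _ _ h\<phi> b coeff_rel[OF hf h\<phi> eq]]) (simp_all add: taylor_coeff_def f0 f1)
qed

theorem theorem4p5: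
  fixes lam :: real and f1 f2 :: "complex \<Rightarrow> complex"
  assumes "lam > 0" and "lam \<le> 1"
    and "f1 \<in> Omega lam" and "f2 \<in> Omega lam"
  shows "hadamard f1 f2 \<in> Omega lam"
proof -
  note lam = assms(1,2)
  obtain \<phi>1 where hf1: "f1 holomorphic_on ball 0 1" and a0: "taylor_coeff f1 0 = 0" and a1: "taylor_coeff f1 1 = 1"
    and h1: "\<phi>1 holomorphic_on ball 0 1" and b1: "\<forall>z\<in>ball 0 1. norm (\<phi>1 z) \<le> 1"
    and r1: "\<And>j. of_nat (j+1) * taylor_coeff f1 (j+2) = of_real lam * taylor_coeff \<phi>1 j"
    using omega_data[OF assms(3)] by blast
  obtain \<phi>2 where hf2: "f2 holomorphic_on ball 0 1" and b0: "taylor_coeff f2 0 = 0" and bb1: "taylor_coeff f2 1 = 1"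
    and h2: "\<phi>2 holomorphic_on ball 0 1" and b2: "\<forall>z\<in>ball 0 1. norm (\<phi>2 z) \<le> 1"
    and r2: "\<And>j. of_nat (j+1) * taylor_coeff f2 (j+2) = of_real lam * taylor_coeff \<phi>2 j"
    using omega_data[OF assms(4)] by blast
  have nn: "cmod (1 + complex_of_nat j) = 1 + real j" for j
    using norm_of_nat[of "Suc j", where 'a=complex] by simp
  have dv: "x / real (j + 1) \<le> x" if "0 \<le> x" for x :: real and j
    using divide_left_mono[of 1 "real (j + 1)" x] that by simp
  define a where "a = taylor_coeff f1"
  define b where "b = taylor_coeff f2"
  define c where "c = taylor_coeff \<phi>1"
  define d where "d = taylor_coeff \<phi>2"
  note bs1 = bessel_summable[OF h1 b1, folded c_def]
  note bs2 = bessel_summable[OF h2 b2, folded d_def]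
  have a2: "a (j+2) = of_real lam * c j / of_nat (j+1)" for j
    using r1[of j] unfolding a_def c_def by (simp add: field_simps del: of_nat_Suc)
  have b2': "b (j+2) = of_real lam * d j / of_nat (j+1)" for j
    using r2[of j] unfolding b_def d_def by (simp add: field_simps del: of_nat_Suc)
  have na: "norm (a (j+2)) \<le> 1" for j
  proof -
    have "norm (a (j+2)) = lam * norm (c j) / (j+1)" using lam unfolding a2
      by (simp add: norm_mult norm_divide nn)
    also have "\<dots> \<le> lam * norm (c j)" using lam by (intro dv) simp
    also have "\<dots> \<le> 1" using lam bs1(3)[of j] by (simp add: mult_le_one)
    finally show ?thesis .
  qed
  have nb: "norm (b (j+2)) \<le> 1" for j
  proof -
    have "norm (b (j+2)) = lam * norm (d j) / (j+1)" using lam unfolding b2'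
      by (simp add: norm_mult norm_divide nn)
    also have "\<dots> \<le> lam * norm (d j)" using lam by (intro dv) simp
    also have "\<dots> \<le> 1" using lam bs2(3)[of j] by (simp add: mult_le_one)
    finally show ?thesis .
  qed
  define H where "H = Abs_fps (\<lambda>k. a k * b k)"
  define \<Psi> where "\<Psi> = Abs_fps (\<lambda>j. of_real lam * c j * d j / of_nat (j+1))"
  have nH: "norm (fps_nth H n) \<le> 1" for n
  proof (cases n)
    case 0 thus ?thesis using a0 by (simp add: H_def a_def)
  next
    case (Suc m) note m = this
    show ?thesis
    proof (cases m)
      case 0 thus ?thesis using a1 bb1 m by (simp add: H_def a_def b_def)
    next
      case (Suc j)
      hence "n = j + 2" using m by simp
      thus ?thesis using na[of j] nb[of j]
        by (simp add: H_def norm_mult mult_le_one)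
    qed
  qed
  define t where "t j = lam * ((norm (c j))\<^sup>2 + (norm (d j))\<^sup>2) / 2" for j
  have nP: "norm (fps_nth \<Psi> j) \<le> t j" for j
  proof -
    have "norm (fps_nth \<Psi> j) = lam * (norm (c j) * norm (d j)) / (j+1)"
      using lam by (simp add: \<Psi>_def norm_mult norm_divide nn)
    also have "\<dots> \<le> lam * (norm (c j) * norm (d j))"
      using lam by (intro dv) simp
    also have "\<dots> \<le> t j"
    proof -
      have "2 * (norm (c j) * norm (d j)) \<le> norm (c j) ^ 2 + norm (d j) ^ 2"
        using sum_squares_ge_zero[of "norm (c j) - norm (d j)" 0]
        by (simp add: power2_eq_square algebra_simps)
      hence "lam * (2 * (norm (c j) * norm (d j))) \<le> lam * (norm (c j) ^ 2 + norm (d j) ^ 2)"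
        using lam by (intro mult_left_mono) auto
      thus ?thesis unfolding t_def by simp
    qed
    finally show ?thesis .
  qed
  have nP1: "norm (fps_nth \<Psi> j) \<le> 1" for j
  proof -
    have "norm (c j) ^ 2 \<le> 1" "norm (d j) ^ 2 \<le> 1"
      using bs1(3)[of j] bs2(3)[of j] by (auto intro: power_le_one)
    hence "((norm (c j))\<^sup>2 + (norm (d j))\<^sup>2) / 2 \<le> 1" by simp
    hence "lam * (((norm (c j))\<^sup>2 + (norm (d j))\<^sup>2) / 2) \<le> 1"
      using lam by (intro mult_le_one) auto
    thus ?thesis using nP[of j] unfolding t_def by simp
  qed
  have ts: "summable t" unfolding t_def
    by (intro summable_divide summable_mult summable_add bs1(1) bs2(1))
  have tsum: "suminf t \<le> lam"
  proof -
    have "suminf t = lam * ((\<Sum>j. (norm (c j))\<^sup>2) + (\<Sum>j. (norm (d j))\<^sup>2)) / 2"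
      unfolding t_def
      using suminf_divide[OF summable_mult[OF summable_add[OF bs1(1) bs2(1)], of lam], of 2]
        suminf_mult[OF summable_add[OF bs1(1) bs2(1)], of lam]
        suminf_add[OF bs1(1) bs2(1)] by simp
    also have "\<dots> \<le> lam * (1 + 1) / 2"
      using bs1(2) bs2(2) lam by (intro divide_right_mono mult_left_mono add_mono) auto
    finally show ?thesis by simp
  qed
  have RH: "fps_conv_radius H \<ge> 1" by (rule conv_radius_bounded[OF nH])
  have RP: "fps_conv_radius \<Psi> \<ge> 1" by (rule conv_radius_bounded[OF nP1])
  have hH: "hadamard f1 f2 = eval_fps H"
    by (rule ext) (simp add: hadamard_def eval_fps_def H_def a_def b_def)
  have ballsub: "ball 0 1 \<subseteq> eball 0 (fps_conv_radius F)" if "fps_conv_radius F \<ge> 1" for F :: "complex fps"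
    using ball_eball_mono[of 1 "fps_conv_radius F" 0] that by (simp add: one_ereal_def)
  have inR: "ereal (norm z) < fps_conv_radius F" if "fps_conv_radius F \<ge> 1" "z \<in> ball 0 1" for F :: "complex fps" and z
  proof -
    have "z \<in> eball 0 (fps_conv_radius F)" using ballsub[OF that(1)] that(2) by blast
    thus ?thesis by (simp add: dist_norm)
  qed
  have fpseq: "fps_X * fps_deriv H - H = fps_const (complex_of_real lam) * fps_X ^ 2 * \<Psi>"
  proof (rule fps_ext)
    fix n :: nat
    show "(fps_X * fps_deriv H - H) $ n = (fps_const (complex_of_real lam) * fps_X ^ 2 * \<Psi>) $ n"
    proof (cases "n < 2")
      case True
      hence "n = 0 \<or> n = 1" by auto
      thus ?thesis using a0 a1 bb1 by (auto simp: H_def a_def b_def mult.assoc fps_X_power_mult_nth)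
    next
      case False
      then obtain j where j: "n = j + 2" by (metis add.commute le_Suc_ex not_less)
      have "(fps_X * fps_deriv H - H) $ n = of_nat (j+1) * (a (j+2) * b (j+2))"
        unfolding j by (simp add: H_def fps_deriv_def algebra_simps)
      also have "\<dots> = of_real lam * (of_real lam * c j * d j / of_nat (j+1))"
        unfolding a2 b2' by (simp add: field_simps del: of_nat_Suc)
      also have "\<dots> = (fps_const (complex_of_real lam) * fps_X ^ 2 * \<Psi>) $ n"
        unfolding j by (simp add: \<Psi>_def mult.assoc fps_X_power_mult_nth)
      finally show ?thesis .
    qed
  qed
  have "eval_fps H holomorphic_on ball 0 1"
    by (rule holomorphic_on_eval_fps[OF ballsub[OF RH]])
  moreover have "eval_fps H 0 = 0" using a0 by (simp add: eval_fps_at_0 H_def a_def)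
  moreover have "deriv (eval_fps H) 0 = 1"
  proof -
    have "deriv (eval_fps H) 0 = eval_fps (fps_deriv H) 0"
      using inR[OF RH, of 0] by (intro eval_fps_deriv[symmetric]) auto
    thus ?thesis using a1 bb1 by (simp add: eval_fps_at_0 H_def a_def b_def)
  qed
  moreover have "eval_fps \<Psi> holomorphic_on ball 0 1"
    by (rule holomorphic_on_eval_fps[OF ballsub[OF RP]])
  moreover have "\<forall>z\<in>ball 0 1. norm (eval_fps \<Psi> z) \<le> 1"
  proof
    fix z :: complex assume z: "z \<in> ball 0 1"
    have le: "norm (fps_nth \<Psi> n * z ^ n) \<le> t n" for n
    proof -
      have "norm (fps_nth \<Psi> n * z ^ n) = norm (fps_nth \<Psi> n) * norm z ^ n" by (simp add: norm_mult norm_power)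
      also have "\<dots> \<le> norm (fps_nth \<Psi> n) * 1"
        using z by (intro mult_left_mono power_le_one) auto
      also have "\<dots> \<le> t n" using nP[of n] by simp
      finally show ?thesis .
    qed
    have sn: "summable (\<lambda>n. norm (fps_nth \<Psi> n * z ^ n))"
      by (rule summable_norm_comparison_test[OF _ ts]) (use le in auto)
    have "norm (eval_fps \<Psi> z) \<le> (\<Sum>n. norm (fps_nth \<Psi> n * z ^ n))"
      unfolding eval_fps_def by (rule summable_norm[OF sn])
    also have "\<dots> \<le> suminf t" by (rule suminf_le[OF le sn ts])
    also have "\<dots> \<le> 1" using tsum lam by simp
    finally show "norm (eval_fps \<Psi> z) \<le> 1" .
  qed
  moreover have "\<forall>z\<in>ball 0 1. z * deriv (eval_fps H) z - eval_fps H z = complex_of_real lam * z ^ 2 * eval_fps \<Psi> z"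
  proof
    fix z :: complex assume z: "z \<in> ball 0 1"
    have zH: "ereal (norm z) < fps_conv_radius H" by (rule inR[OF RH z])
    have zP: "ereal (norm z) < fps_conv_radius \<Psi>" by (rule inR[OF RP z])
    have zdH: "ereal (norm z) < fps_conv_radius (fps_deriv H)"
      using zH fps_conv_radius_deriv[of H] by order
    have zXdH: "ereal (norm z) < fps_conv_radius (fps_X * fps_deriv H)"
      using zdH fps_conv_radius_mult[of fps_X "fps_deriv H"] by (simp add: order.strict_trans2)
    have zXP: "ereal (norm z) < fps_conv_radius (fps_const (complex_of_real lam) * fps_X ^ 2)"
      using fps_conv_radius_mult[of "fps_const (complex_of_real lam)" "fps_X ^ 2"] by (simp add: order.strict_trans2)
    have "z * deriv (eval_fps H) z - eval_fps H z = z * eval_fps (fps_deriv H) z - eval_fps H z"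
      using zH by (simp add: eval_fps_deriv)
    also have "\<dots> = eval_fps (fps_X * fps_deriv H - H) z"
      using zH zdH zXdH by (simp add: eval_fps_diff eval_fps_mult)
    also have "\<dots> = eval_fps (fps_const (complex_of_real lam) * fps_X ^ 2 * \<Psi>) z"
      unfolding fpseq ..
    also have "\<dots> = complex_of_real lam * z ^ 2 * eval_fps \<Psi> z"
      using zP zXP by (simp add: eval_fps_mult)
    finally show "z * deriv (eval_fps H) z - eval_fps H z = complex_of_real lam * z ^ 2 * eval_fps \<Psi> z" .
  qed
  ultimately show ?thesis unfolding hH Omega_def by blast
qed

end
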